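(* Let $G$ be an ordered group and let $S$ be a finite subset of $G$ with $|S|=k\geq 1$. If $|S^2|<2|S|$, then there exist commuting elements $x,y\in G$ such that $S=\{y,yx,yx^2,\ldots,yx^{k-1}\}$. Equivalently, if $S$ is not of this form (not a geometric progression), then $|S^2|\geq 2|S|$.
   Context: An ordered group is a group $G$ (written multiplicatively) equipped with a total order $<$ that is invariant under both left and right multiplication: $a<b$ implies $ca<cb$ and $ac<bc$ for all $a,b,c\in G$. For a subset $S\subseteq G$, $S^2=\{ab : a,b\in S\}$. A geometric progression is a set of the form $\{yx^i : 0\le i\le k-1\}$ with $x,y\in G$ commuting. *)

theory Defs
  imports Main
begin

class ordered_group = monoid_mult + inverse + linorder +
  assumes left_inverse: "inverse a * a = 1"
  assumes mult_left_strict_mono: "a < b \<Longrightarrow> c * a < c * b"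
  assumes mult_right_strict_mono: "a < b \<Longrightarrow> a * c < b * c"

definition setprod2 :: "'a::times set \<Rightarrow> 'a set" where
  "setprod2 S = {a * b | a b. a \<in> S \<and> b \<in> S}"

end

theory Submission
  imports Defs
begin

context ordered_group
begin

lemma cancel_left: "c * a = c * b \<Longrightarrow> a = b"
  by (metis less_irrefl mult_left_strict_mono neqE)

lemma cancel_right: "a * c = b * c \<Longrightarrow> a = b"
  by (metis less_irrefl mult_right_strict_mono neqE)

lemma mono_left: "a \<le> b \<Longrightarrow> c * a \<le> c * b"
  by (metis order.order_iff_strict mult_left_strict_mono)

lemma mono_right: "a \<le> b \<Longrightarrow> a * c \<le> b * c"
  by (metis order.order_iff_strict mult_right_strict_mono)

lemma right_inverse: "a * inverse a = 1"
proof -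
  have "a * inverse a = 1 * (a * inverse a)" by simp
  also have "\<dots> = (inverse (inverse a) * inverse a) * (a * inverse a)"
    by (simp add: left_inverse)
  also have "\<dots> = inverse (inverse a) * ((inverse a * a) * inverse a)"
    by (simp add: mult.assoc)
  also have "\<dots> = 1" by (simp add: left_inverse)
  finally show ?thesis .
qed

lemma pow_gt1: "1 < x \<Longrightarrow> 1 < x ^ Suc n"
proof (induction n)
  case 0 then show ?case by simp
next
  case (Suc n)
  have "1 * x < x ^ Suc n * x" using Suc mult_right_strict_mono by blast
  then have "x < x ^ Suc (Suc n)" by (metis mult_1_left power_Suc2)
  then show ?case using Suc.prems by simp
qed

lemma pow_strict: "1 < x \<Longrightarrow> i < j \<Longrightarrow> z * x ^ i < z * x ^ j"
proof -
  assume x: "1 < x" and ij: "i < j"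
  from less_imp_Suc_add[OF ij] obtain d where d: "j = i + Suc d" by auto
  have lt: "(z * x ^ i) * 1 < (z * x ^ i) * x ^ Suc d"
    by (rule mult_left_strict_mono, rule pow_gt1[OF x])
  have e: "z * x ^ j = (z * x ^ i) * x ^ Suc d"
    unfolding d power_add by (simp only: mult.assoc)
  show ?thesis using lt unfolding e by simp
qed

lemma pow_mono: "1 < x \<Longrightarrow> i \<le> j \<Longrightarrow> z * x ^ i \<le> z * x ^ j"
  using pow_strict by (metis order.order_iff_strict le_neq_implies_less)

lemma gp_mult: "x * y = y * x \<Longrightarrow> (y * x ^ i) * (y * x ^ j) = (y * y) * x ^ (i + j)"
proof -
  assume c: "x * y = y * x"
  have "x ^ i * y = y * x ^ i" using power_commuting_commutes[OF c] .
  then show ?thesis by (simp add: mult.assoc power_add) (metis mult.assoc)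
qed

end

lemma step:
  fixes S T :: "'a::ordered_group set"
  assumes fin: "finite S" and m: "m \<in> S" and mmax: "\<forall>a\<in>S. a \<le> m"
    and T: "T = S - {m}" and t: "t \<in> T" and tmax: "\<forall>a\<in>T. a \<le> t"
  shows "setprod2 T \<union> {t * m, m * m} \<subseteq> setprod2 S"
    and "t * m \<notin> setprod2 T" "m * m \<notin> setprod2 T" "t * m < m * m"
    and "\<forall>z\<in>setprod2 T. z \<le> t * t"
    and "card (setprod2 S) \<ge> card (setprod2 T) + 2"
proof -
  have tm: "t < m" using t T mmax by (metis DiffE insertCI order.order_iff_strict)
  have up: "\<forall>z\<in>setprod2 T. z \<le> t * t"
  proof
    fix z assume "z \<in> setprod2 T"
    then obtain a b where z: "z = a * b" "a \<in> T" "b \<in> T" unfolding setprod2_def by blast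
    have "a * b \<le> t * b" using z tmax mono_right by blast
    also have "\<dots> \<le> t * t" using z tmax mono_left by blast
    finally show "z \<le> t * t" using z by simp
  qed
  then show "\<forall>z\<in>setprod2 T. z \<le> t * t" .
  have l1: "t * t < t * m" using tm mult_left_strict_mono by blast
  have l2: "t * m < m * m" using tm mult_right_strict_mono by blast
  show "t * m < m * m" by (rule l2)
  show sub: "setprod2 T \<union> {t * m, m * m} \<subseteq> setprod2 S"
    using T t m unfolding setprod2_def by blast
  show n1: "t * m \<notin> setprod2 T" using up l1 by (meson not_le)
  show n2: "m * m \<notin> setprod2 T" using up l1 l2 by (meson not_le order.strict_trans)
  have finS2: "finite (setprod2 S)"
  proof -
    have "setprod2 S = (\<lambda>(a,b). a * b) ` (S \<times> S)" unfolding setprod2_def by auto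
    then show ?thesis using fin by simp
  qed
  have finT2: "finite (setprod2 T)" using sub finS2 finite_subset by blast
  have "card (setprod2 T \<union> {t * m, m * m}) = card (setprod2 T) + 2"
    using n1 n2 l2 finT2 by simp
  then show "card (setprod2 S) \<ge> card (setprod2 T) + 2"
    using card_mono[OF finS2 sub] by simp
qed

lemma finite_prod2: "finite S \<Longrightarrow> finite (setprod2 S)"
proof -
  assume fin: "finite S"
  have "setprod2 S = (\<lambda>(a,b). a * b) ` (S \<times> S)" unfolding setprod2_def by auto
  then show ?thesis using fin by simp
qed

lemma lower:
  fixes S :: "'a::ordered_group set"
  shows "finite S \<Longrightarrow> card S = k \<Longrightarrow> k \<ge> 1 \<Longrightarrow> 2 * k - 1 \<le> card (setprod2 S)"
proof (induction k arbitrary: S rule: less_induct)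
  case (less k)
  show ?case
  proof (cases "k = 1")
    case True
    then obtain a where "S = {a}" using less card_1_singletonE by metis
    then have "setprod2 S = {a * a}" unfolding setprod2_def by auto
    then show ?thesis using True by simp
  next
    case False
    define m where "m = Max S"
    have ne: "S \<noteq> {}" using less by auto
    have m: "m \<in> S" "\<forall>a\<in>S. a \<le> m" using less ne m_def by auto
    define T where "T = S - {m}"
    have cT: "card T = k - 1" "finite T" using less m T_def by auto
    then have neT: "T \<noteq> {}" using False less by auto
    define t where "t = Max T"
    have t: "t \<in> T" "\<forall>a\<in>T. a \<le> t" using cT neT t_def by auto
    have "card (setprod2 S) \<ge> card (setprod2 T) + 2"
      using step(6)[OF less(2) m T_def t] .
    moreover have "2 * (k - 1) - 1 \<le> card (setprod2 T)"
      using less.IH[of "k - 1" T] cT False less by auto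
    ultimately show ?thesis using False less by linarith
  qed
qed

lemma img: "{f i | i. i < k} = f ` {..<k}"
  by auto

lemma main:
  fixes S :: "'a::ordered_group set"
  shows "finite S \<Longrightarrow> card S = k \<Longrightarrow> k \<ge> 1 \<Longrightarrow> card (setprod2 S) \<le> 2 * k - 1 \<Longrightarrow>
    \<exists>x y. x * y = y * x \<and> (2 \<le> k \<longrightarrow> 1 < x) \<and> S = {y * x ^ i | i. i < k}"
proof (induction k arbitrary: S rule: less_induct)
  case (less k)
  show ?case
  proof (cases "k = 1")
    case True
    have "card S = 1" using less.prems True by simp
    then obtain a where S: "S = {a}" by (rule card_1_singletonE)
    have "{a * (1::'a) ^ i | i. i < k} = {a}" unfolding img True by (simp add: lessThan_Suc)
    then have "1 * a = a * 1 \<and> (2 \<le> k \<longrightarrow> 1 < (1::'a)) \<and> S = {a * 1 ^ i | i. i < k}"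
      using S True by simp
    then show ?thesis by (intro exI)
  next
    case False
    define m where "m = Max S"
    have ne: "S \<noteq> {}" using less.prems by auto
    have m: "m \<in> S" "\<forall>a\<in>S. a \<le> m" using less.prems ne m_def by auto
    define T where "T = S - {m}"
    have cT: "card T = k - 1" "finite T" using less.prems m T_def by auto
    then have neT: "T \<noteq> {}" using False less.prems by auto
    have lowT: "2 * (k - 1) - 1 \<le> card (setprod2 T)"
      using lower[of T "k - 1"] cT False less.prems by auto
    have SI: "S = insert m T" using m T_def by auto
    show ?thesis
    proof (cases "k = 2")
      case True
      have "card T = 1" using cT True by simp
      then obtain a where Ta: "T = {a}" by (rule card_1_singletonE)
      have t: "a \<in> T" "\<forall>b\<in>T. b \<le> a" using Ta by auto
      note st = step[OF less(2) m T_def t]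
      have "a \<in> S" "a \<noteq> m" using t(1) T_def by auto
      then have am: "a < m" using m(2) by (simp add: less_le)
      have T2: "setprod2 T = {a * a}" using Ta unfolding setprod2_def by auto
      have eqS2: "setprod2 S = {a * a, a * m, m * m}"
      proof -
        have sub: "setprod2 T \<union> {a * m, m * m} \<subseteq> setprod2 S" using st(1) .
        have c3: "card (setprod2 T \<union> {a * m, m * m}) = 3"
          using st(2,3,4) T2 by (auto simp: card_insert_if)
        have cS: "card (setprod2 S) \<le> 3" using less.prems True by simp
        have "setprod2 T \<union> {a * m, m * m} = setprod2 S"
          using card_seteq[OF finite_prod2[OF less.prems(1)] sub] c3 cS by simp
        then show ?thesis using T2 by auto
      qed
      have "m * a \<in> setprod2 S" using m Ta SI unfolding setprod2_def by blast
      moreover have "a * a < m * a" using am mult_right_strict_mono by blast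
      moreover have "m * a < m * m" using am mult_left_strict_mono by blast
      ultimately have comm: "m * a = a * m" using eqS2 by auto
      define x where "x = inverse a * m"
      have yx: "a * x = m" unfolding x_def by (simp add: mult.assoc[symmetric] right_inverse)
      have "x * a = inverse a * (m * a)" unfolding x_def by (simp only: mult.assoc)
      also have "\<dots> = (inverse a * a) * m" unfolding comm by (simp only: mult.assoc)
      finally have xy: "x * a = m" by (simp add: left_inverse)
      have x1: "1 < x" unfolding x_def using mult_left_strict_mono[OF am, of "inverse a"] by (simp add: left_inverse)
      have "S = {a * x ^ i | i. i < k}"
        unfolding img True SI Ta using yx by (simp add: lessThan_Suc numeral_2_eq_2 insert_commute)
      then have "x * a = a * x \<and> (2 \<le> k \<longrightarrow> 1 < x) \<and> S = {a * x ^ i | i. i < k}"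
        using yx xy x1 by simp
      then show ?thesis by (intro exI)
    next
      case k2: False
      have k3: "k \<ge> 3" using k2 False less.prems by auto
      define t where "t = Max T"
      have t: "t \<in> T" "\<forall>a\<in>T. a \<le> t" using cT neT t_def by auto
      note st = step[OF less(2) m T_def t]
      have "card (setprod2 T) \<le> 2 * (k - 1) - 1" using st(6) less.prems k3 by linarith
      note bnd = this
      have kk: "k - 1 < k" "1 \<le> k - 1" "2 \<le> k - 1" using k3 by auto
      from less.IH[OF kk(1) cT(2) cT(1) kk(2) bnd] obtain x y where
        xy: "x * y = y * x" and x1': "2 \<le> k - 1 \<longrightarrow> 1 < x" and Tg: "T = {y * x ^ i | i. i < k - 1}"
        by (elim exE conjE)
      have x1: "1 < x" using mp[OF x1' kk(3)] .
      have eqS2: "setprod2 S = setprod2 T \<union> {t * m, m * m}"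
      proof -
        have "card (setprod2 T \<union> {t * m, m * m}) = card (setprod2 T) + 2"
          using st(2,3,4) finite_prod2[OF cT(2)] by simp
        then have "card (setprod2 S) \<le> card (setprod2 T \<union> {t * m, m * m})"
          using lowT less.prems k3 by linarith
        then show ?thesis using card_seteq[OF finite_prod2[OF less(2)] st(1)] by simp
      qed
      define s where "s = y * x ^ (k - 3)"
      have sT: "s \<in> T" unfolding s_def Tg using k3 by auto
      have tval: "t = y * x ^ (k - 2)"
      proof (rule antisym)
        have "y * x ^ (k - 2) \<in> T" unfolding Tg using k3 by auto
        then show "y * x ^ (k - 2) \<le> t" using t by auto
        obtain i where "t = y * x ^ i" "i < k - 1" using t(1) Tg by auto
        then show "t \<le> y * x ^ (k - 2)" using pow_mono[OF x1, of i "k - 2" y] by simp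
      qed
      have st_lt: "s < t" unfolding s_def tval using pow_strict[OF x1, of "k - 3" "k - 2" y] k3 by simp
      have smS: "s * m \<in> setprod2 S" using sT SI unfolding setprod2_def by blast
      have "s * m < t * m" using st_lt mult_right_strict_mono by blast
      moreover then have "s * m < m * m" using st(4) by simp
      ultimately have "s * m \<in> setprod2 T" using eqS2 smS by auto
      then obtain a b where ab: "s * m = a * b" "a \<in> T" "b \<in> T" unfolding setprod2_def by blast
      then obtain i j where ij: "a = y * x ^ i" "i < k - 1" "b = y * x ^ j" "j < k - 1" using Tg by auto
      have smv: "s * m = (y * y) * x ^ (i + j)" using ab ij gp_mult[OF xy] by simp
      have e5: "k - 3 + (k - 2) = 2 * k - 5" using k3 by linarith
      have stv: "s * t = (y * y) * x ^ (2 * k - 5)"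
        unfolding s_def tval using gp_mult[OF xy, of "k-3" "k-2"] e5 by simp
      have "s * t < s * m" using mult_left_strict_mono m t SI T_def
        by (metis DiffE insertCI order.order_iff_strict)
      then have "\<not> i + j \<le> 2 * k - 5" using smv stv pow_mono[OF x1, of "i+j" "2*k-5" "y*y"] by auto
      then have ijv: "i + j = 2 * k - 4" using ij k3 by linarith
      have e4: "k - 3 + (k - 1) = 2 * k - 4" using k3 by linarith
      have "s * (y * x ^ (k - 1)) = (y * y) * x ^ (2 * k - 4)"
        unfolding s_def using gp_mult[OF xy, of "k-3" "k-1"] e4 by simp
      then have mv: "m = y * x ^ (k - 1)" using smv ijv cancel_left by metis
      have "S = {y * x ^ i | i. i < k}"
      proof -
        have "{y * x ^ i | i. i < k} = insert (y * x ^ (k - 1)) {y * x ^ i | i. i < k - 1}"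
        proof -
          obtain n where kn: "k = Suc n" using k3 by (cases k) auto
          have g: "\<And>j. {y * x ^ i | i. i < j} = (\<lambda>i. y * x ^ i) ` {..<j}" by blast
          show ?thesis unfolding kn g by (simp add: lessThan_Suc)
        qed
        then show ?thesis using SI mv Tg by simp
      qed
      then show ?thesis using xy x1 by blast
    qed
  qed
qed

theorem lemma2:
  fixes S :: "'a::ordered_group set" and k :: nat
  assumes "finite S" and "card S = k" and "k \<ge> 1"
    and "card (setprod2 S) < 2 * card S"
  shows "\<exists>x y. x * y = y * x \<and> S = {y * x ^ i | i. i < k}"
  using main[OF assms(1,2,3)] assms(2,4) by fastforce

end
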